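(* Let $m\ge 1$ and consider the labeled chip-firing process on $\mathbb{Z}$ starting with $2m$ chips labeled $-m,\dots,-1,1,\dots,m$ at site $0$. In any sequence of firing moves, at every point of the process: for each label $k<0$, the position of chip $k$ is at most $k+m$; and for each label $k>0$, the position of chip $k$ is at least $k-m$.
   Context: Labeled chip-firing on the infinite path graph $\mathbb{Z}$ (each integer $i$ adjacent to $i-1$ and $i+1$): a firing move consists of choosing two chips with labels $a<b$ located at a common site $i$, and moving chip $a$ to site $i-1$ and chip $b$ to site $i+1$. *)

theory Defs
  imports Main
begin

text \<open>Labeled chip-firing on the path graph Z. A configuration maps each chip label
to its current site. The chips are labeled -m,...,-1,1,...,m.\<close>

definition chip_labels :: "int \<Rightarrow> int set" where
  "chip_labels m = {-m..-1} \<union> {1..m}"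

definition fire_step :: "int \<Rightarrow> (int \<Rightarrow> int) \<Rightarrow> (int \<Rightarrow> int) \<Rightarrow> bool" where
  "fire_step m c c' \<longleftrightarrow>
     (\<exists>a b. a \<in> chip_labels m \<and> b \<in> chip_labels m \<and> a < b \<and> c a = c b \<and>
            c' = c(a := c a - 1, b := c b + 1))"

definition init_config :: "int \<Rightarrow> int" where
  "init_config = (\<lambda>_. 0)"

end

theory Submission
  imports Defs
begin

definition SS :: "int \<Rightarrow> int \<Rightarrow> int set" where
  "SS m t = {a \<in> chip_labels m. a \<le> t}"

definition cset :: "int \<Rightarrow> int \<Rightarrow> (int \<Rightarrow> int) \<Rightarrow> int \<Rightarrow> int set" where
  "cset m t c j = {a \<in> SS m t. j \<le> c a}"

definition Inv :: "int \<Rightarrow> int \<Rightarrow> (int \<Rightarrow> int) \<Rightarrow> bool" where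
  "Inv m t c \<longleftrightarrow> (\<forall>j\<ge>1. int (card (cset m t c j)) \<le> max 0 (int (card (SS m t)) - j))"

lemma finSS: "finite (SS m t)"
  unfolding SS_def chip_labels_def by auto

lemma fincset: "finite (cset m t c j)"
  unfolding cset_def using finSS by auto

lemma Inv_init: "Inv m t init_config"
  unfolding Inv_def cset_def init_config_def by auto

lemma Inv_step:
  assumes "fire_step m c d" "Inv m t c"
  shows "Inv m t d"
proof -
  obtain a b where ab: "a \<in> chip_labels m" "b \<in> chip_labels m" "a < b" "c a = c b"
    and d: "d = c(a := c a - 1, b := c b + 1)"
    using assms(1) unfolding fire_step_def by blast
  define i where "i = c a"
  have da: "d a = i - 1" and db: "d b = i + 1" and dx: "\<And>x. x \<noteq> a \<Longrightarrow> x \<noteq> b \<Longrightarrow> d x = c x"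
    using d ab(3,4) i_def by auto
  have sub: "cset m t d j \<subseteq> cset m t c j" if "j \<noteq> i + 1" for j
  proof
    fix x assume x: "x \<in> cset m t d j"
    show "x \<in> cset m t c j"
    proof (cases "x = a \<or> x = b")
      case True then show ?thesis using x that da db ab(4) i_def unfolding cset_def by auto
    next
      case False then show ?thesis using x dx unfolding cset_def by auto
    qed
  qed
  have cardS: "card (cset m t c j) \<le> card (SS m t)" for j
    by (rule card_mono[OF finSS]) (auto simp: cset_def)
  have ci: "int (card (cset m t c i)) \<le> max 0 (int (card (SS m t)) - i)"
  proof (cases "i \<ge> 1")
    case True then show ?thesis using assms(2) unfolding Inv_def by auto
  next
    case False
    then show ?thesis using cardS[of i] by auto
  qed
  show ?thesis unfolding Inv_def
  proof (intro allI impI)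
    fix j :: int assume j: "j \<ge> 1"
    show "int (card (cset m t d j)) \<le> max 0 (int (card (SS m t)) - j)"
    proof (cases "j = i + 1")
      case False
      have "card (cset m t d j) \<le> card (cset m t c j)"
        by (rule card_mono[OF fincset sub[OF False]])
      then show ?thesis using assms(2) j unfolding Inv_def by force
    next
      case True
      show ?thesis
      proof (cases "b \<in> SS m t")
        case False
        have "cset m t d j \<subseteq> cset m t c j"
        proof
          fix x assume x: "x \<in> cset m t d j"
          show "x \<in> cset m t c j"
          proof (cases "x = a \<or> x = b")
            case True then show ?thesis using x False da db ab(4) i_def unfolding cset_def by auto
          next
            case False then show ?thesis using x dx unfolding cset_def by auto
          qed
        qed
        then have "card (cset m t d j) \<le> card (cset m t c j)"
          by (rule card_mono[OF fincset])
        then show ?thesis using assms(2) j unfolding Inv_def by force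
      next
        case bS: True
        have aS: "a \<in> SS m t" using bS ab unfolding SS_def by auto
        have s1: "cset m t d j \<subseteq> insert b (cset m t c j)"
        proof
          fix x assume x: "x \<in> cset m t d j"
          show "x \<in> insert b (cset m t c j)"
          proof (cases "x = a \<or> x = b")
            case True then show ?thesis using x \<open>j = i + 1\<close> da db ab(4) i_def unfolding cset_def by auto
          next
            case False then show ?thesis using x dx unfolding cset_def by auto
          qed
        qed
        have "card (cset m t d j) \<le> card (insert b (cset m t c j))"
          by (rule card_mono) (use s1 fincset in auto)
        also have "\<dots> \<le> card (cset m t c j) + 1"
          by (simp add: card_insert_if fincset)
        finally have e1: "card (cset m t d j) \<le> card (cset m t c j) + 1" .
        have s2: "insert a (insert b (cset m t c j)) \<subseteq> cset m t c i"
          using aS bS ab(4) i_def True unfolding cset_def by auto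
        have "a \<notin> cset m t c j" "b \<notin> cset m t c j" "a \<noteq> b"
          using True ab(3,4) i_def unfolding cset_def by auto
        then have "card (insert a (insert b (cset m t c j))) = card (cset m t c j) + 2"
          by (simp add: fincset)
        moreover have "card (insert a (insert b (cset m t c j))) \<le> card (cset m t c i)"
          by (rule card_mono[OF fincset s2])
        ultimately have e2: "card (cset m t c j) + 2 \<le> card (cset m t c i)" by simp
        show ?thesis using e1 e2 ci True by linarith
      qed
    qed
  qed
qed

lemma Inv_reach:
  assumes "(fire_step m)\<^sup>*\<^sup>* init_config c"
  shows "Inv m t c"
  using assms
proof (induction rule: rtranclp_induct)
  case base then show ?case by (rule Inv_init)
next
  case (step y z) then show ?case using Inv_step by blast
qed

lemma neg_bound:
  assumes "m \<ge> 1" "(fire_step m)\<^sup>*\<^sup>* init_config c" "k \<in> chip_labels m" "k < 0"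
  shows "c k \<le> k + m"
proof (rule ccontr)
  assume "\<not> c k \<le> k + m"
  then have p: "c k \<ge> 1" "c k > k + m" using assms(3) unfolding chip_labels_def by auto
  have SSk: "SS m k = {-m..k}" using assms(3,4) unfolding SS_def chip_labels_def by auto
  have cardS: "int (card (SS m k)) = k + m + 1" using SSk assms(3,4) unfolding chip_labels_def by auto
  have "k \<in> cset m k c (c k)" using assms(3) unfolding cset_def SS_def by auto
  then have "card (cset m k c (c k)) \<ge> 1" using fincset
    by (metis One_nat_def Suc_leI card_gt_0_iff empty_iff)
  moreover have "int (card (cset m k c (c k))) \<le> max 0 (int (card (SS m k)) - c k)"
    using Inv_reach[OF assms(2), of k] p unfolding Inv_def by auto
  ultimately show False using cardS p by linarith
qed

definition mir :: "(int \<Rightarrow> int) \<Rightarrow> int \<Rightarrow> int" where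
  "mir c = (\<lambda>a. - c (- a))"

lemma labels_neg: "(- a \<in> chip_labels m) = (a \<in> chip_labels m)"
  unfolding chip_labels_def by auto

lemma mir_step:
  assumes "fire_step m c d" shows "fire_step m (mir c) (mir d)"
proof -
  obtain a b where ab: "a \<in> chip_labels m" "b \<in> chip_labels m" "a < b" "c a = c b"
    and d: "d = c(a := c a - 1, b := c b + 1)"
    using assms(1) unfolding fire_step_def by blast
  have "mir d = (mir c)(- b := mir c (- b) - 1, - a := mir c (- a) + 1)"
    using ab(3,4) unfolding d mir_def by (auto simp: fun_eq_iff)
  moreover have "- b \<in> chip_labels m" "- a \<in> chip_labels m" using ab labels_neg by auto
  moreover have "mir c (- b) = mir c (- a)" using ab(4) unfolding mir_def by simp
  ultimately show ?thesis unfolding fire_step_def using ab(3)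
    by (metis neg_less_iff_less)
qed

lemma mir_reach:
  assumes "(fire_step m)\<^sup>*\<^sup>* init_config c"
  shows "(fire_step m)\<^sup>*\<^sup>* init_config (mir c)"
  using assms
proof (induction rule: rtranclp_induct)
  case base
  have "mir init_config = init_config" unfolding mir_def init_config_def by simp
  then show ?case by simp
next
  case (step y z) then show ?case using mir_step
    by (metis rtranclp.rtrancl_into_rtrancl)
qed

theorem lemma2p8:
  fixes m :: int and c :: "int \<Rightarrow> int"
  assumes "m \<ge> 1"
    and "(fire_step m)\<^sup>*\<^sup>* init_config c"
  shows "(\<forall>k \<in> chip_labels m. k < 0 \<longrightarrow> c k \<le> k + m) \<and>
         (\<forall>k \<in> chip_labels m. k > 0 \<longrightarrow> c k \<ge> k - m)"
proof (intro conjI ballI impI)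
  fix k assume "k \<in> chip_labels m" "k < 0"
  then show "c k \<le> k + m" using neg_bound assms by blast
next
  fix k assume k: "k \<in> chip_labels m" "k > 0"
  have "mir c (- k) \<le> - k + m"
    using neg_bound[OF assms(1) mir_reach[OF assms(2)], of "- k"] k labels_neg[of k m] by auto
  then show "c k \<ge> k - m" unfolding mir_def by simp
qed

end
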